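(* For every integer $r\geq 1$, \[\sum_{\lambda\leq N}\rho_{r^2}(\lambda)\sim \frac{6}{\pi^2}\,N\log N \qquad (N\to\infty).\]
   Context: For integers $k\geq 0$ and $d\geq 1$, $\rho_k(d):=\#\{0\leq x<d:\ x^2\equiv k \pmod d\}$. The sum runs over positive integers $\lambda\le N$. *)

theory Defs
  imports "HOL-Analysis.Analysis" "HOL-Library.Landau_Symbols"
begin

definition rho :: "nat \<Rightarrow> nat \<Rightarrow> nat" where
  "rho k d = card {x. x < d \<and> x^2 mod d = k mod d}"

end

theory Submission
  imports Defs "HOL-Computational_Algebra.Squarefree" "HOL-Real_Asymp.Real_Asymp"
begin


definition Pairs :: "nat \<Rightarrow> (nat \<times> nat) set" where
  "Pairs n = Sigma {1..n} (\<lambda>a. {1..n div a})"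

lemma finite_Pairs [simp]: "finite (Pairs n)"
  unfolding Pairs_def by auto

lemma mem_Pairs: "(a, b) \<in> Pairs n \<longleftrightarrow> 1 \<le> a \<and> 1 \<le> b \<and> a * b \<le> n"
proof -
  have "1 \<le> a \<Longrightarrow> (b \<le> n div a) = (a * b \<le> n)"
    by (simp add: less_eq_div_iff_mult_less_eq mult.commute)
  moreover have "1 \<le> a \<Longrightarrow> 1 \<le> b \<Longrightarrow> a * b \<le> n \<Longrightarrow> a \<le> n"
    by (metis dual_order.trans mult.right_neutral mult_le_mono2)
  ultimately show ?thesis unfolding Pairs_def by auto
qed

lemma dvd_facts:
  assumes "(a::nat) dvd d" "1 \<le> d"
  shows "1 \<le> a" "1 \<le> d div a" "a * (d div a) = d"
proof -
  show e: "a * (d div a) = d" using assms by simp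
  then show "a \<ge> 1" "d div a \<ge> 1" using assms(2) by (metis le_less_linear less_one mult_is_0 not_one_le_zero)+
qed

lemma exchange:
  fixes f :: "nat \<Rightarrow> nat \<Rightarrow> 'a::comm_monoid_add"
  shows "(\<Sum>d\<in>{1..N}. \<Sum>a\<in>{a. a dvd d}. f a (d div a)) = (\<Sum>a\<in>{1..N}. \<Sum>b\<in>{1..N div a}. f a b)"
proof -
  have "(\<Sum>d\<in>{1..N}. \<Sum>a\<in>{a. a dvd d}. f a (d div a)) = (\<Sum>(d,a)\<in>Sigma {1..N} (\<lambda>d. {a. a dvd d}). f a (d div a))"
    by (rule sum.Sigma) auto
  also have "\<dots> = (\<Sum>(a,b)\<in>Pairs N. f a b)"
    by (rule sum.reindex_bij_witness[where i = "\<lambda>(a,b). (a*b, a)" and j = "\<lambda>(d,a). (a, d div a)"])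
       (auto simp: mem_Pairs dvd_facts Suc_le_eq)
  also have "\<dots> = (\<Sum>a\<in>{1..N}. \<Sum>b\<in>{1..N div a}. f a b)"
    unfolding Pairs_def by (rule sum.Sigma[symmetric]) auto
  finally show ?thesis .
qed

lemma swap_pairs:
  fixes G :: "nat \<Rightarrow> nat \<Rightarrow> 'a::comm_monoid_add"
  shows "(\<Sum>a\<in>{1..N}. \<Sum>c\<in>{1..N div a}. G a c) = (\<Sum>c\<in>{1..N}. \<Sum>a\<in>{1..N div c}. G a c)"
proof -
  have "(\<Sum>a\<in>{1..N}. \<Sum>c\<in>{1..N div a}. G a c) = (\<Sum>(a,c)\<in>Pairs N. G a c)"
    unfolding Pairs_def by (rule sum.Sigma) auto
  also have "\<dots> = (\<Sum>(c,a)\<in>Pairs N. G a c)"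
    by (rule sum.reindex_bij_witness[where i = "\<lambda>(a,b). (b,a)" and j = "\<lambda>(a,b). (b,a)"])
       (auto simp: mem_Pairs mult.commute)
  also have "\<dots> = (\<Sum>c\<in>{1..N}. \<Sum>a\<in>{1..N div c}. G a c)"
    unfolding Pairs_def by (rule sum.Sigma[symmetric]) auto
  finally show ?thesis .
qed



definition mu :: "nat \<Rightarrow> int" where
  "mu n = (if squarefree n then (-1) ^ card (prime_factors n) else 0)"

lemma mu_abs_le: "\<bar>mu n\<bar> \<le> 1"
  by (simp add: mu_def)

lemma mu_0 [simp]: "mu 0 = 0" by (simp add: mu_def)

lemma prod_primes_dvd:
  fixes n :: nat
  assumes "finite S" "S \<subseteq> prime_factors n"
  shows "\<Prod>S dvd n"
  using assms
proof (induction S rule: finite_induct)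
  case empty then show ?case by simp
next
  case (insert p S)
  have pp: "prime p" using insert by auto
  have "coprime p (\<Prod>S)"
  proof (rule prod_coprime_right)
    fix q assume "q \<in> S"
    then have "prime q" "q \<noteq> p" using insert by auto
    then show "coprime p q" using pp by (simp add: primes_coprime)
  qed
  moreover have "p dvd n" using insert by auto
  moreover have "\<Prod>S dvd n" using insert by auto
  ultimately show ?case using insert by (simp add: divides_mult)
qed

lemma prime_factors_prod_primes:
  fixes S :: "nat set"
  assumes "finite S" "\<And>p. p \<in> S \<Longrightarrow> prime p"
  shows "prime_factors (\<Prod>S) = S"
proof -
  have "0 \<notin> id ` S" using assms(2) by (metis id_apply image_iff not_prime_0)
  then have "prime_factors (\<Prod>S) = \<Union> ((prime_factors \<circ> id) ` S)"
    using prime_factors_prod[of S id] assms by simp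
  also have "\<dots> = S" using assms by (auto simp: prime_prime_factors)
  finally show ?thesis .
qed

lemma squarefree_prod_primes:
  fixes S :: "nat set"
  assumes "finite S" "\<And>p. p \<in> S \<Longrightarrow> prime p"
  shows "squarefree (\<Prod>S)"
  using assms by (intro squarefree_prod_coprime) (auto simp: primes_coprime squarefree_prime)

lemma squarefree_prod_prime_factors:
  fixes d :: nat
  assumes "squarefree d"
  shows "\<Prod>(prime_factors d) = d"
proof -
  have d0: "d \<noteq> 0" using assms by (metis not_squarefree_0)
  have d0': "d > 0" using d0 by simp
  have "\<Prod>(prime_factors d) = (\<Prod>p\<in>prime_factors d. p ^ multiplicity p d)"
    using assms d0 d0' by (intro prod.cong) (auto simp: squarefree_factorial_semiring')
  also have "\<dots> = d" using d0 by (simp add: prod_prime_factors gr0I)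
  finally show ?thesis .
qed

lemma sum_pow_neg: 
  assumes "finite A"
  shows "(\<Sum>X\<in>Pow A. (-1::int) ^ card X) = (if A = {} then 1 else 0)"
proof -
  have "(\<Prod>x\<in>A. (1::int) - 1) = (\<Sum>X\<in>Pow A. (-1) ^ card X * (\<Prod>x\<in>X. 1) * (\<Prod>x\<in>A-X. 1))"
    by (rule prod_diff_conv_sum[OF assms]) 
  moreover have "A \<noteq> {} \<Longrightarrow> (0::int) ^ card A = 0" using assms by (simp add: card_gt_0_iff)
  ultimately show ?thesis using assms by auto
qed

lemma mu_sum:
  assumes "n > 0"
  shows "(\<Sum>d\<in>{d. d dvd n}. mu d) = (if n = 1 then 1 else 0)"
proof -
  have fin: "finite {d. d dvd n}" using assms by simp
  have "(\<Sum>d\<in>{d. d dvd n}. mu d) = (\<Sum>d\<in>{d. d dvd n \<and> squarefree d}. (-1) ^ card (prime_factors d))"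
    using fin by (intro sum.mono_neutral_cong_right) (auto simp: mu_def)
  also have "\<dots> = (\<Sum>X\<in>Pow (prime_factors n). (-1) ^ card X)"
  proof (rule sum.reindex_bij_witness[where i = "\<lambda>X. \<Prod>X" and j = "prime_factors"])
    fix X assume X: "X \<in> Pow (prime_factors n)"
    then have f: "finite X" by (meson PowD finite_set_mset finite_subset)
    have pr: "\<And>p. p \<in> X \<Longrightarrow> prime p" using X by auto
    show "prime_factors (\<Prod>X) = X" using prime_factors_prod_primes[OF f pr] .
    show "\<Prod>X \<in> {d. d dvd n \<and> squarefree d}"
      using prod_primes_dvd[OF f] X squarefree_prod_primes[OF f pr] by auto
  next
    fix d assume d: "d \<in> {d. d dvd n \<and> squarefree d}"
    show "\<Prod>(prime_factors d) = d" using d squarefree_prod_prime_factors by auto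
    show "prime_factors d \<in> Pow (prime_factors n)"
      using d assms by (auto simp: prime_factors_dvd intro: dvd_trans)
    show "(-1::int) ^ card (prime_factors d) = (-1) ^ card (prime_factors d)" by simp
  qed
  also have "\<dots> = (if n = 1 then 1 else 0)"
  proof -
    have "prime_factors n = {} \<longleftrightarrow> n = 1"
    proof -
      have "prime_factors n = {} \<longleftrightarrow> prime_factorization n = {#}" by simp
      also have "\<dots> \<longleftrightarrow> n = 1" using assms by (simp add: prime_factorization_empty_iff)
      finally show ?thesis .
    qed
    then show ?thesis by (simp add: sum_pow_neg)
  qed
  finally show ?thesis .
qed



definition D :: "nat \<Rightarrow> nat" where "D n = card (Pairs n)"
definition C :: "nat \<Rightarrow> nat" where "C n = card {p \<in> Pairs n. coprime (fst p) (snd p)}"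

lemma D_sum: "D n = (\<Sum>a\<in>{1..n}. n div a)"
  unfolding D_def Pairs_def by (subst card_SigmaI) auto

lemma D_0 [simp]: "D 0 = 0" by (simp add: D_sum)
lemma C_le_D: "C n \<le> D n"
  unfolding C_def D_def by (rule card_mono) auto
lemma C_0 [simp]: "C 0 = 0" using C_le_D[of 0] by simp

lemma scale_image:
  assumes k: "k \<ge> (1::nat)"
  shows "(\<lambda>(x,y). (k*x, k*y)) ` {q \<in> Pairs (n div k^2). P (fst q) (snd q)}
       = {p \<in> Pairs n. k dvd fst p \<and> k dvd snd p \<and> P (fst p div k) (snd p div k)}"
proof (rule set_eqI, rule iffI)
  fix p assume "p \<in> (\<lambda>(x,y). (k*x, k*y)) ` {q \<in> Pairs (n div k^2). P (fst q) (snd q)}"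
  then obtain q where q: "q \<in> {q \<in> Pairs (n div k^2). P (fst q) (snd q)}" "p = (\<lambda>(x,y). (k*x, k*y)) q"
    by (rule imageE)
  obtain x y where "q = (x,y)" by (cases q)
  then have p: "p = (k*x, k*y)" "(x,y) \<in> Pairs (n div k^2)" "P x y" using q by auto
  then have "1 \<le> x" "1 \<le> y" "x*y*k^2 \<le> n" using k by (auto simp: mem_Pairs less_eq_div_iff_mult_less_eq)
  moreover have "(k*x)*(k*y) = x*y*k^2" by (simp add: power2_eq_square mult_ac)
  ultimately have "1 \<le> k*x" "1 \<le> k*y" "(k*x)*(k*y) \<le> n" using k
    by (simp add: one_le_mult_iff, simp add: one_le_mult_iff, linarith)
  then show "p \<in> {p \<in> Pairs n. k dvd fst p \<and> k dvd snd p \<and> P (fst p div k) (snd p div k)}"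
    using p k by (auto simp: mem_Pairs)
next
  fix p assume "p \<in> {p \<in> Pairs n. k dvd fst p \<and> k dvd snd p \<and> P (fst p div k) (snd p div k)}"
  then obtain a b where p: "p = (a,b)" "1 \<le> a" "1 \<le> b" "a*b \<le> n" "k dvd a" "k dvd b" "P (a div k) (b div k)"
    by (cases p) (auto simp: mem_Pairs)
  then obtain x y where xy: "a = k*x" "b = k*y" by (auto elim!: dvdE)
  then have "1 \<le> x" "1 \<le> y" using p by auto
  moreover have "x * y * k^2 \<le> n" using p xy by (simp add: power2_eq_square mult_ac)
  ultimately have "(x,y) \<in> Pairs (n div k^2)" using k by (auto simp: mem_Pairs less_eq_div_iff_mult_less_eq)
  moreover have "P x y" using p xy k by simp
  ultimately show "p \<in> (\<lambda>(x,y). (k*x, k*y)) ` {q \<in> Pairs (n div k^2). P (fst q) (snd q)}"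
    using p xy by (auto intro!: image_eqI[where x = "(x,y)"])
qed

lemma scale_card:
  assumes k: "k \<ge> (1::nat)"
  shows "card {q \<in> Pairs (n div k^2). P (fst q) (snd q)}
       = card {p \<in> Pairs n. k dvd fst p \<and> k dvd snd p \<and> P (fst p div k) (snd p div k)}"
proof -
  have "inj_on (\<lambda>(x,y). (k*x, k*y)) {q \<in> Pairs (n div k^2). P (fst q) (snd q)}"
    using k by (auto simp: inj_on_def)
  then show ?thesis by (subst scale_image[OF k, symmetric]) (rule card_image[symmetric])
qed

lemma count_dvd_pairs:
  assumes k: "k \<ge> (1::nat)"
  shows "card {p \<in> Pairs n. k dvd gcd (fst p) (snd p)} = D (n div k^2)"
  using scale_card[OF k, of n "\<lambda>_ _. True"] by (simp add: D_def)

lemma count_dvd_pairs':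
  assumes k: "k \<ge> (1::nat)"
  shows "card {p \<in> Pairs n. k dvd fst p \<and> k dvd snd p} = D (n div k^2)"
  using scale_card[OF k, of n "\<lambda>_ _. True"] by (simp add: D_def)

lemma count_gcd_pairs:
  assumes k: "k \<ge> (1::nat)"
  shows "card {p \<in> Pairs n. gcd (fst p) (snd p) = k} = C (n div k^2)"
proof -
  have "{p \<in> Pairs n. gcd (fst p) (snd p) = k}
      = {p \<in> Pairs n. k dvd fst p \<and> k dvd snd p \<and> coprime (fst p div k) (snd p div k)}"
  proof (rule Collect_cong, rule iffI)
    fix p assume "p \<in> Pairs n \<and> gcd (fst p) (snd p) = k"
    then show "p \<in> Pairs n \<and> k dvd fst p \<and> k dvd snd p \<and> coprime (fst p div k) (snd p div k)"
      using k by (metis div_gcd_coprime gcd_dvd1 gcd_dvd2 not_one_le_zero gcd_eq_0_iff)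
  next
    fix p assume a: "p \<in> Pairs n \<and> k dvd fst p \<and> k dvd snd p \<and> coprime (fst p div k) (snd p div k)"
    then obtain x y where xy: "fst p = k*x" "snd p = k*y" by (auto elim!: dvdE)
    then have "gcd (fst p) (snd p) = k * gcd x y" by (simp add: gcd_mult_distrib_nat)
    then show "p \<in> Pairs n \<and> gcd (fst p) (snd p) = k" using a xy k by auto
  qed
  then show ?thesis using scale_card[OF k, of n "\<lambda>x y. coprime x y"] by (simp add: C_def)
qed

lemma group_gcd:
  fixes \<phi> :: "nat \<Rightarrow> 'a::comm_semiring_1"
  shows "(\<Sum>p\<in>Pairs M. \<phi> (gcd (fst p) (snd p))) = (\<Sum>g\<in>{1..M}. \<phi> g * of_nat (C (M div g^2)))"
proof -
  have sub: "(\<lambda>p. gcd (fst p) (snd p)) ` Pairs M \<subseteq> {1..M}"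
  proof
    fix g assume "g \<in> (\<lambda>p. gcd (fst p) (snd p)) ` Pairs M"
    then obtain a b where "(a,b) \<in> Pairs M" "g = gcd a b" by auto
    then have "1 \<le> a" "1 \<le> b" "a * b \<le> M" "g = gcd a b" by (auto simp: mem_Pairs)
    have "gcd a b \<le> a" using \<open>1 \<le> a\<close> by (simp add: gcd_le1_nat)
    also have "a \<le> a * b" using \<open>1 \<le> b\<close> by simp
    also have "\<dots> \<le> M" using \<open>a * b \<le> M\<close> .
    finally have "gcd a b \<le> M" .
    moreover have "gcd a b \<ge> 1" using \<open>1 \<le> a\<close> by (simp add: Suc_le_eq)
    ultimately show "g \<in> {1..M}" using \<open>g = gcd a b\<close> by simp
  qed
  have "(\<Sum>p\<in>Pairs M. \<phi> (gcd (fst p) (snd p)))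
      = (\<Sum>g\<in>{1..M}. \<Sum>p\<in>{p \<in> Pairs M. gcd (fst p) (snd p) = g}. \<phi> (gcd (fst p) (snd p)))"
    by (rule sum.group[symmetric, OF finite_Pairs _ sub]) simp
  also have "\<dots> = (\<Sum>g\<in>{1..M}. \<phi> g * of_nat (C (M div g^2)))"
  proof (rule sum.cong[OF refl])
    fix g assume "g \<in> {1..M}"
    then have "g \<ge> 1" by simp
    have "(\<Sum>p\<in>{p \<in> Pairs M. gcd (fst p) (snd p) = g}. \<phi> (gcd (fst p) (snd p)))
        = (\<Sum>p\<in>{p \<in> Pairs M. gcd (fst p) (snd p) = g}. \<phi> g)" by (rule sum.cong) auto
    also have "\<dots> = \<phi> g * of_nat (C (M div g^2))"
      using count_gcd_pairs[OF \<open>g \<ge> 1\<close>, of M] by (simp add: mult.commute)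
    finally show "(\<Sum>p\<in>{p \<in> Pairs M. gcd (fst p) (snd p) = g}. \<phi> (gcd (fst p) (snd p))) = \<phi> g * of_nat (C (M div g^2))" .
  qed
  finally show ?thesis .
qed

lemma D_as_C: "D n = (\<Sum>g\<in>{1..n}. C (n div g^2))"
proof -
  have "of_nat (D n) = (\<Sum>p\<in>Pairs n. (\<lambda>_. 1::nat) (gcd (fst p) (snd p)))"
    by (simp add: D_def)
  also have "\<dots> = (\<Sum>g\<in>{1..n}. C (n div g^2))" by (subst group_gcd) simp
  finally show ?thesis by simp
qed

lemma C_as_D: "int (C n) = (\<Sum>k\<in>{1..n}. mu k * int (D (n div k^2)))"
proof -
  have "int (C n) = (\<Sum>p\<in>Pairs n. if coprime (fst p) (snd p) then 1 else 0)"
    by (simp add: C_def sum.If_cases Int_def)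
  also have "\<dots> = (\<Sum>p\<in>Pairs n. \<Sum>k\<in>{k \<in> {1..n}. k dvd gcd (fst p) (snd p)}. mu k)"
  proof (rule sum.cong[OF refl])
    fix p assume p: "p \<in> Pairs n"
    obtain a b where ab: "p = (a,b)" by (cases p)
    then have "1 \<le> a" "1 \<le> b" "a*b \<le> n" using p by (auto simp: mem_Pairs)
    then have g: "gcd a b > 0" "gcd a b \<le> n"
      using gcd_le1_nat[of a b] by (auto intro: order.trans[OF _ order.trans[of a "a*b" n]])
    have "1 \<le> k \<and> k \<le> n" if "k dvd gcd a b" for k
    proof
      have "k \<le> gcd a b" using that g(1) by (rule dvd_imp_le)
      then show "k \<le> n" using g(2) by simp
      show "1 \<le> k" using that g(1) by (cases "k = 0") auto
    qed
    then have "{k \<in> {1..n}. k dvd gcd a b} = {k. k dvd gcd a b}" by auto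
    then show "(if coprime (fst p) (snd p) then 1 else 0) = (\<Sum>k\<in>{k \<in> {1..n}. k dvd gcd (fst p) (snd p)}. mu k)"
      using mu_sum[OF g(1)] ab by (simp add: coprime_iff_gcd_eq_1)
  qed
  also have "\<dots> = (\<Sum>k\<in>{1..n}. \<Sum>p\<in>{p \<in> Pairs n. k dvd gcd (fst p) (snd p)}. mu k)"
    by (rule sum.swap_restrict) auto
  also have "\<dots> = (\<Sum>k\<in>{1..n}. mu k * int (D (n div k^2)))"
    by (rule sum.cong[OF refl]) (simp add: count_dvd_pairs' mult.commute)
  finally show ?thesis .
qed



lemma count_mod:
  assumes L: "L > (0::nat)" "L dvd d" and j: "j < L"
  shows "card {x. x < d \<and> x mod L = j} = d div L"
proof -
  have "{x. x < d \<and> x mod L = j} = (\<lambda>q. q * L + j) ` {..<d div L}"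
  proof (rule set_eqI, rule iffI)
    fix x assume x: "x \<in> {x. x < d \<and> x mod L = j}"
    have "x mod L = j" using x by simp
    then have "x = (x div L) * L + j" using div_mult_mod_eq[of x L] by simp
    moreover have "x div L < d div L"
      using x L by (intro less_mult_imp_div_less) (simp add: dvd_div_mult_self)
    ultimately show "x \<in> (\<lambda>q. q * L + j) ` {..<d div L}" by blast
  next
    fix x assume "x \<in> (\<lambda>q. q * L + j) ` {..<d div L}"
    then obtain q where q: "q < d div L" "x = q * L + j" by auto
    have "Suc q * L \<le> (d div L) * L" using q(1) by (intro mult_le_mono1) simp
    also have "\<dots> = d" using L by simp
    finally have "x < d" using q j by simp
    moreover have "x mod L = j" using q j by simp
    ultimately show "x \<in> {x. x < d \<and> x mod L = j}" by simp
  qed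
  moreover have "inj_on (\<lambda>q. q * L + j) {..<d div L}"
    using L by (auto simp: inj_on_def)
  ultimately show ?thesis by (simp add: card_image)
qed

lemma crt_count:
  assumes d: "d > (0::nat)" and m1: "m1 dvd d" and m2: "m2 dvd d"
  shows "card {x. x < d \<and> int m1 dvd (int x - u) \<and> int m2 dvd (int x - v)}
       = (if int (gcd m1 m2) dvd (u - v) then d div lcm m1 m2 else 0)"
proof (cases "int (gcd m1 m2) dvd (u - v)")
  case False
  have "{x. x < d \<and> int m1 dvd (int x - u) \<and> int m2 dvd (int x - v)} = {}"
  proof (rule ccontr)
    assume "{x. x < d \<and> int m1 dvd (int x - u) \<and> int m2 dvd (int x - v)} \<noteq> {}"
    then obtain x where x: "int m1 dvd (int x - u)" "int m2 dvd (int x - v)" by auto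
    have "int (gcd m1 m2) dvd int m1" "int (gcd m1 m2) dvd int m2" by simp_all
    then have "int (gcd m1 m2) dvd (int x - v) - (int x - u)" using x by (meson dvd_diff dvd_trans)
    then show False using False by simp
  qed
  then show ?thesis using False by simp
next
  case True
  define g where "g = int (gcd m1 m2)"
  obtain h where h: "u - v = g * h" using True unfolding g_def by (auto elim: dvdE)
  obtain s t where st: "s * int m1 + t * int m2 = gcd (int m1) (int m2)" using bezout_int by blast
  then have st': "s * int m1 + t * int m2 = g" by (simp add: g_def gcd_int_int_eq)
  define x0 where "x0 = u - s * int m1 * h"
  have x01: "int m1 dvd (x0 - u)" unfolding x0_def by simp
  have "x0 - v = (g - s * int m1) * h" unfolding x0_def using h by (simp add: algebra_simps)
  also have "\<dots> = t * int m2 * h"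
  proof -
    have "g - s * int m1 = t * int m2" using st' by linarith
    then show ?thesis by simp
  qed
  finally have x02: "int m2 dvd (x0 - v)" by simp
  define L where "L = lcm m1 m2"
  have L0: "L > 0" using d m1 m2 unfolding L_def by (intro lcm_pos_nat) (auto intro!: Nat.gr0I)
  have Ld: "L dvd d" unfolding L_def using m1 m2 by simp
  define j where "j = nat (x0 mod int L)"
  have j: "j < L" unfolding j_def using L0 by (simp add: nat_less_iff)
  have "{x. x < d \<and> int m1 dvd (int x - u) \<and> int m2 dvd (int x - v)} = {x. x < d \<and> x mod L = j}"
  proof (rule Collect_cong)
    fix x
    have "int m1 dvd (int x - u) \<longleftrightarrow> int m1 dvd ((int x - x0) + (x0 - u))" by simp
    also have "\<dots> \<longleftrightarrow> int m1 dvd (int x - x0)" by (rule dvd_add_left_iff[OF x01])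
    finally have e1: "int m1 dvd (int x - u) \<longleftrightarrow> int m1 dvd (int x - x0)" .
    have "int m2 dvd (int x - v) \<longleftrightarrow> int m2 dvd ((int x - x0) + (x0 - v))" by simp
    also have "\<dots> \<longleftrightarrow> int m2 dvd (int x - x0)" by (rule dvd_add_left_iff[OF x02])
    finally have e2: "int m2 dvd (int x - v) \<longleftrightarrow> int m2 dvd (int x - x0)" .
    note e1 e2
    moreover have "(int m1 dvd (int x - x0) \<and> int m2 dvd (int x - x0)) \<longleftrightarrow> int L dvd (int x - x0)"
      by (simp only: L_def lcm_least_iff flip: lcm_int_int_eq)
    moreover have "int L dvd (int x - x0) \<longleftrightarrow> x mod L = j"
    proof -
      have "int L dvd (int x - x0) \<longleftrightarrow> int x mod int L = x0 mod int L" by (simp add: mod_eq_dvd_iff)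
      also have "\<dots> \<longleftrightarrow> int (x mod L) = int j" unfolding j_def using L0 by (simp add: of_nat_mod)
      finally show ?thesis by simp
    qed
    ultimately show "(x < d \<and> int m1 dvd (int x - u) \<and> int m2 dvd (int x - v)) = (x < d \<and> x mod L = j)"
      by blast
  qed
  then show ?thesis using True count_mod[OF L0 Ld j] by (simp add: L_def)
qed



lemma key_indicator:
  fixes X Y :: int
  assumes d: "d > (0::nat)"
  shows "(if int d dvd X * Y then 1 else 0) =
    (\<Sum>a\<in>{a. a dvd d}. \<Sum>c\<in>{c. c dvd d div a}. mu c * (if int (c*a) dvd X \<and> int (d div a) dvd Y then 1 else 0))"
proof -
  define G where "G = gcd (int d) X"
  define g where "g = nat G"
  have G0: "G > 0" unfolding G_def using d by simp
  have gG: "int g = G" unfolding g_def using G0 by simp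
  have g0: "g > 0" using G0 gG by simp
  have "int g dvd int d" unfolding gG G_def by simp
  then have gd: "g dvd d" by simp
  have gX: "int g dvd X" unfolding gG G_def by simp
  have inner: "(\<Sum>c\<in>{c. c dvd d div a}. mu c * (if int (c*a) dvd X \<and> int (d div a) dvd Y then 1 else 0))
      = (if a = g \<and> int (d div a) dvd Y then 1 else 0)" if a: "a \<in> {a. a dvd d}" for a
  proof -
    have ad: "a dvd d" using a by simp
    have a0: "a > 0" using ad d by (cases "a = 0") auto
    have da: "1 \<le> d div a" using dvd_facts(2)[OF ad] d by simp
    have finc: "finite {c. c dvd d div a}" using da by (intro finite_divisors_nat) simp
    show ?thesis
    proof (cases "int a dvd X \<and> int (d div a) dvd Y")
      case False
      have z: "mu c * (if int (c*a) dvd X \<and> int (d div a) dvd Y then 1 else 0) = 0" for c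
      proof -
        have "int (c*a) dvd X \<Longrightarrow> int a dvd X" using dvd_mult_right[of "int c" "int a" X] by simp
        then show ?thesis using False by auto
      qed
      have s0: "(\<Sum>c\<in>{c. c dvd d div a}. mu c * (if int (c*a) dvd X \<and> int (d div a) dvd Y then 1 else 0)) = 0"
        by (rule sum.neutral) (use z in blast)
      moreover have "(if a = g \<and> int (d div a) dvd Y then 1 else 0) = (0::int)" using False gX by auto
      ultimately show ?thesis by simp
    next
      case True
      have adg: "a dvd g"
      proof -
        have "int a dvd int d" using ad by simp
        then have "int a dvd G" unfolding G_def using True by simp
        then have "int a dvd int g" using gG by simp
        then show ?thesis by simp
      qed
      have "(\<Sum>c\<in>{c. c dvd d div a}. mu c * (if int (c*a) dvd X \<and> int (d div a) dvd Y then 1 else 0))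
          = (\<Sum>c\<in>{c. c dvd d div a}. if int (c*a) dvd X then mu c else 0)"
        using True by (intro sum.cong) auto
      also have "\<dots> = (\<Sum>c\<in>{c \<in> {c. c dvd d div a}. int (c*a) dvd X}. mu c)"
        using finc by (rule sum.inter_filter[symmetric])
      also have "{c \<in> {c. c dvd d div a}. int (c*a) dvd X} = {c. c dvd g div a}"
      proof (rule set_eqI)
        fix c
        have "c dvd d div a \<longleftrightarrow> c * a dvd d" using ad a0 by (simp add: dvd_div_iff_mult)
        moreover have "(c * a dvd d \<and> int (c*a) dvd X) \<longleftrightarrow> int (c*a) dvd G"
          unfolding G_def gcd_greatest_iff by (simp only: of_nat_dvd_iff)
        moreover have "int (c*a) dvd G \<longleftrightarrow> c * a dvd g" unfolding gG[symmetric] by (rule of_nat_dvd_iff)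
        moreover have "c * a dvd g \<longleftrightarrow> c dvd g div a" using adg a0 by (simp add: dvd_div_iff_mult)
        ultimately show "c \<in> {c \<in> {c. c dvd d div a}. int (c*a) dvd X} \<longleftrightarrow> c \<in> {c. c dvd g div a}" by auto
      qed
      also have "(\<Sum>c\<in>{c. c dvd g div a}. mu c) = (if g div a = 1 then 1 else 0)"
        using dvd_facts(2)[OF adg] g0 by (intro mu_sum) simp
      also have "(g div a = 1) \<longleftrightarrow> a = g"
      proof
        assume "g div a = 1" then show "a = g" using dvd_facts(3)[OF adg] g0 by simp
      next
        assume "a = g" then show "g div a = 1" using g0 by simp
      qed
      finally show ?thesis using True by simp
    qed
  qed
  have "(\<Sum>a\<in>{a. a dvd d}. \<Sum>c\<in>{c. c dvd d div a}. mu c * (if int (c*a) dvd X \<and> int (d div a) dvd Y then 1 else 0))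
      = (\<Sum>a\<in>{a. a dvd d}. if a = g then (if int (d div a) dvd Y then 1 else 0) else 0)"
    using inner by (intro sum.cong) auto
  also have "\<dots> = (if int (d div g) dvd Y then 1 else 0)"
    using d gd by (subst sum.delta) auto
  also have "int (d div g) dvd Y \<longleftrightarrow> int d dvd X * Y"
  proof
    assume h: "int (d div g) dvd Y"
    have e: "g * (d div g) = d" using gd by simp
    have "int d = int g * int (d div g)" using e by (metis of_nat_mult)
    then show "int d dvd X * Y" using mult_dvd_mono[OF gX h] by (simp add: mult.commute)
  next
    assume h: "int d dvd X * Y"
    obtain X' where X': "X = int g * X'" using gX by (auto elim: dvdE)
    have e: "g * (d div g) = d" using gd by simp
    have dd: "int d = int g * int (d div g)" using e by (metis of_nat_mult)
    have "int (d div g) dvd X' * Y" using h X' dd g0 by (simp add: mult.assoc)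
    moreover have "coprime (int (d div g)) X'"
    proof -
      have "coprime (int d div G) (X div G)" unfolding G_def using d by (intro div_gcd_coprime) simp
      moreover have "int d div G = int (d div g)" using gG by (simp add: zdiv_int)
      moreover have "X div G = X'" using X' gG g0 by simp
      ultimately show ?thesis by simp
    qed
    ultimately show "int (d div g) dvd Y" by (simp add: coprime_dvd_mult_right_iff)
  qed
  finally show ?thesis by simp
qed



definition phi :: "nat \<Rightarrow> nat \<Rightarrow> nat \<Rightarrow> nat" where
  "phi r c g = (if c * g dvd 2 * r then g else 0)"

lemma rho_as_card:
  assumes d: "d > 0"
  shows "int (rho (r^2) d) = (\<Sum>x\<in>{..<d}. if int d dvd (int x - int r) * (int x - (- int r)) then 1 else 0)"
proof -
  have "{x. x < d \<and> x^2 mod d = r^2 mod d} = {x \<in> {..<d}. int d dvd (int x - int r) * (int x - (- int r))}"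
  proof (rule set_eqI)
    fix x
    have "x^2 mod d = r^2 mod d \<longleftrightarrow> int (x^2 mod d) = int (r^2 mod d)" by (simp only: of_nat_eq_iff)
    also have "\<dots> \<longleftrightarrow> (int x)^2 mod int d = (int r)^2 mod int d" by (simp add: of_nat_mod)
    also have "\<dots> \<longleftrightarrow> int d dvd (int x)^2 - (int r)^2" by (rule mod_eq_dvd_iff)
    also have "(int x)^2 - (int r)^2 = (int x - int r) * (int x - (- int r))" by (simp add: algebra_simps power2_eq_square)
    finally show "x \<in> {x. x < d \<and> x^2 mod d = r^2 mod d} \<longleftrightarrow> x \<in> {x \<in> {..<d}. int d dvd (int x - int r) * (int x - (- int r))}"
      by auto
  qed
  then have "int (rho (r^2) d) = int (card {x \<in> {..<d}. int d dvd (int x - int r) * (int x - (- int r))})"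
    by (simp add: rho_def)
  also have "\<dots> = (\<Sum>x\<in>{x \<in> {..<d}. int d dvd (int x - int r) * (int x - (- int r))}. 1)" by simp
  also have "\<dots> = (\<Sum>x\<in>{..<d}. if int d dvd (int x - int r) * (int x - (- int r)) then 1 else 0)"
    by (rule sum.inter_filter) simp
  finally show ?thesis .
qed

lemma count_eval:
  assumes d: "d > 0" and ad: "a dvd d" and c: "c dvd d div a"
  shows "(\<Sum>x\<in>{..<d}. mu c * (if int (c*a) dvd (int x - int r) \<and> int (d div a) dvd (int x - (- int r)) then 1 else 0))
       = mu c * int (phi r c (gcd a (d div a div c)))"
proof -
  define b where "b = d div a div c"
  have db: "d div a = c * b" unfolding b_def using c by simp
  have dd: "d = a * (c * b)" using ad db by (metis dvd_mult_div_cancel)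
  have m1: "c * a dvd d" using dd by (simp add: mult_ac)
  have m2: "d div a dvd d" using ad by (metis dvd_triv_right dvd_mult_div_cancel)
  have "(\<Sum>x\<in>{..<d}. mu c * (if int (c*a) dvd (int x - int r) \<and> int (d div a) dvd (int x - (- int r)) then 1 else 0))
      = mu c * (\<Sum>x\<in>{..<d}. (if int (c*a) dvd (int x - int r) \<and> int (d div a) dvd (int x - (- int r)) then 1 else 0))"
    by (simp add: sum_distrib_left)
  also have "(\<Sum>x\<in>{..<d}. (if int (c*a) dvd (int x - int r) \<and> int (d div a) dvd (int x - (- int r)) then 1 else 0))
      = int (card {x. x < d \<and> int (c*a) dvd (int x - int r) \<and> int (d div a) dvd (int x - (- int r))})"
  proof -
    have "(\<Sum>x\<in>{..<d}. (if int (c*a) dvd (int x - int r) \<and> int (d div a) dvd (int x - (- int r)) then 1 else 0))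
       = (\<Sum>x\<in>{x \<in> {..<d}. int (c*a) dvd (int x - int r) \<and> int (d div a) dvd (int x - (- int r))}. (1::int))"
      by (rule sum.inter_filter[symmetric]) simp
    also have "{x \<in> {..<d}. int (c*a) dvd (int x - int r) \<and> int (d div a) dvd (int x - (- int r))}
        = {x. x < d \<and> int (c*a) dvd (int x - int r) \<and> int (d div a) dvd (int x - (- int r))}" by auto
    finally show ?thesis by simp
  qed
  also have "card {x. x < d \<and> int (c*a) dvd (int x - int r) \<and> int (d div a) dvd (int x - (- int r))}
      = (if int (gcd (c*a) (d div a)) dvd (int r - (- int r)) then d div lcm (c*a) (d div a) else 0)"
    by (rule crt_count[OF d m1 m2])
  also have "\<dots> = phi r c (gcd a b)"
  proof -
    have a0: "a > 0" and c0: "c > 0" and b0: "b > 0" using dd d by (auto intro!: Nat.gr0I)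
    have g: "gcd (c*a) (d div a) = c * gcd a b" unfolding db by (simp add: gcd_mult_distrib_nat)
    have l: "lcm (c*a) (d div a) = c * lcm a b" unfolding db by (simp add: lcm_mult_left)
    have "d div lcm (c*a) (d div a) = gcd a b"
    proof -
      have "a * b = gcd a b * lcm a b" by (rule prod_gcd_lcm_nat)
      then have "d = (gcd a b) * (c * lcm a b)" using dd by (simp add: mult_ac)
      moreover have "c * lcm a b > 0" using a0 b0 c0 by (simp add: lcm_pos_nat)
      ultimately show ?thesis using l by simp
    qed
    moreover have "int (gcd (c*a) (d div a)) dvd (int r - (- int r)) \<longleftrightarrow> c * gcd a b dvd 2 * r"
    proof -
      have "int r - (- int r) = int (2 * r)" by simp
      then show ?thesis using g by (simp only: of_nat_dvd_iff)
    qed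
    ultimately show ?thesis by (simp add: phi_def)
  qed
  finally show ?thesis by (simp add: b_def)
qed

lemma rho_formula:
  assumes d: "d > 0"
  shows "int (rho (r^2) d) = (\<Sum>a\<in>{a. a dvd d}. \<Sum>c\<in>{c. c dvd d div a}. mu c * int (phi r c (gcd a (d div a div c))))"
proof -
  have fa: "finite {a. a dvd d}" using d by simp
  have fc: "finite {c. c dvd d div a}" if "a \<in> {a. a dvd d}" for a
    using dvd_facts(2)[of a d] that d by (intro finite_divisors_nat) simp
  have "int (rho (r^2) d) = (\<Sum>x\<in>{..<d}. \<Sum>a\<in>{a. a dvd d}. \<Sum>c\<in>{c. c dvd d div a}.
      mu c * (if int (c*a) dvd (int x - int r) \<and> int (d div a) dvd (int x - (- int r)) then 1 else 0))"
    unfolding rho_as_card[OF d] by (intro sum.cong refl key_indicator d)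
  also have "\<dots> = (\<Sum>a\<in>{a. a dvd d}. \<Sum>x\<in>{..<d}. \<Sum>c\<in>{c. c dvd d div a}.
      mu c * (if int (c*a) dvd (int x - int r) \<and> int (d div a) dvd (int x - (- int r)) then 1 else 0))"
    by (rule sum.swap)
  also have "\<dots> = (\<Sum>a\<in>{a. a dvd d}. \<Sum>c\<in>{c. c dvd d div a}. \<Sum>x\<in>{..<d}.
      mu c * (if int (c*a) dvd (int x - int r) \<and> int (d div a) dvd (int x - (- int r)) then 1 else 0))"
    by (intro sum.cong refl sum.swap)
  also have "\<dots> = (\<Sum>a\<in>{a. a dvd d}. \<Sum>c\<in>{c. c dvd d div a}. mu c * int (phi r c (gcd a (d div a div c))))"
    using d by (intro sum.cong refl count_eval) auto
  finally show ?thesis .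
qed



lemma mu_1 [simp]: "mu 1 = 1" by (simp add: mu_def)
lemma mu_Suc0 [simp]: "mu (Suc 0) = 1" by (simp add: mu_def)

lemma sum_extend:
  assumes "finite A" "finite B" "\<And>x. x \<in> A - B \<Longrightarrow> f x = 0" "\<And>x. x \<in> B - A \<Longrightarrow> f x = 0"
  shows "sum f A = sum f B"
proof -
  have "sum f A = sum f (A \<union> B)" using assms by (intro sum.mono_neutral_left) auto
  also have "sum f B = sum f (A \<union> B)" using assms by (intro sum.mono_neutral_left) auto
  finally show ?thesis by simp
qed

lemma total_formula1:
  "(\<Sum>d\<in>{1..N}. int (rho (r^2) d)) =
   (\<Sum>c\<in>{1..N}. mu c * (\<Sum>g\<in>{1..N div c}. int (phi r c g) * int (C (N div c div g^2))))"
proof -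
  define F where "F = (\<lambda>a c b. mu c * int (phi r c (gcd a b)))"
  have "(\<Sum>d\<in>{1..N}. int (rho (r^2) d)) = (\<Sum>d\<in>{1..N}. \<Sum>a\<in>{a. a dvd d}. (\<lambda>a b. \<Sum>c\<in>{c. c dvd b}. F a c (b div c)) a (d div a))"
    by (intro sum.cong refl) (simp add: rho_formula F_def)
  also have "\<dots> = (\<Sum>a\<in>{1..N}. \<Sum>b\<in>{1..N div a}. \<Sum>c\<in>{c. c dvd b}. F a c (b div c))"
    by (rule exchange)
  also have "\<dots> = (\<Sum>a\<in>{1..N}. \<Sum>c\<in>{1..N div a}. \<Sum>b\<in>{1..N div a div c}. F a c b)"
    by (intro sum.cong refl exchange)
  also have "\<dots> = (\<Sum>c\<in>{1..N}. \<Sum>a\<in>{1..N div c}. \<Sum>b\<in>{1..N div a div c}. F a c b)"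
    by (rule swap_pairs)
  also have "\<dots> = (\<Sum>c\<in>{1..N}. mu c * (\<Sum>p\<in>Pairs (N div c). int (phi r c (gcd (fst p) (snd p)))))"
  proof (rule sum.cong[OF refl])
    fix c
    have "(\<Sum>a\<in>{1..N div c}. \<Sum>b\<in>{1..N div a div c}. F a c b) = (\<Sum>a\<in>{1..N div c}. \<Sum>b\<in>{1..N div c div a}. F a c b)"
    proof -
      have "N div a div c = N div c div a" for a by (metis div_mult2_eq mult.commute)
      then show ?thesis by simp
    qed
    also have "\<dots> = (\<Sum>p\<in>Pairs (N div c). F (fst p) c (snd p))"
      unfolding Pairs_def by (subst sum.Sigma) (auto simp: case_prod_beta)
    also have "\<dots> = mu c * (\<Sum>p\<in>Pairs (N div c). int (phi r c (gcd (fst p) (snd p))))"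
      by (simp add: F_def sum_distrib_left)
    finally show "(\<Sum>a\<in>{1..N div c}. \<Sum>b\<in>{1..N div a div c}. F a c b) = mu c * (\<Sum>p\<in>Pairs (N div c). int (phi r c (gcd (fst p) (snd p))))" .
  qed
  also have "\<dots> = (\<Sum>c\<in>{1..N}. mu c * (\<Sum>g\<in>{1..N div c}. int (phi r c g) * int (C (N div c div g^2))))"
    by (intro sum.cong refl arg_cong2[where f = "(*)"]) (simp add: group_gcd[where \<phi> = "\<lambda>g. int (phi r c g)" for c])
  finally show ?thesis .
qed

lemma phi_zero: "r \<ge> 1 \<Longrightarrow> g \<ge> 1 \<Longrightarrow> c \<ge> 1 \<Longrightarrow> (c > 2*r \<or> g > 2*r) \<Longrightarrow> phi r c g = 0"
proof -
  assume r: "r \<ge> 1" and g: "g \<ge> 1" and c: "c \<ge> 1" and h: "c > 2*r \<or> g > 2*r"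
  have "c \<le> c * g" using mult_le_mono2[of 1 g c] g by simp
  moreover have "g \<le> c * g" using mult_le_mono1[of 1 c g] c by simp
  ultimately have "c * g > 2 * r" using h by linarith
  then have "\<not> c * g dvd 2 * r" using r by (auto dest: dvd_imp_le)
  then show ?thesis by (simp add: phi_def)
qed

lemma total_formula:
  assumes r: "r \<ge> 1"
  shows "(\<Sum>d\<in>{1..N}. int (rho (r^2) d)) =
   (\<Sum>c\<in>{1..2*r}. \<Sum>g\<in>{1..2*r}. mu c * int (phi r c g) * int (C (N div (c * g^2))))"
proof -
  have inner: "(\<Sum>g\<in>{1..N div c}. int (phi r c g) * int (C (N div c div g^2)))
      = (\<Sum>g\<in>{1..2*r}. int (phi r c g) * int (C (N div (c * g^2))))" if c: "c \<ge> 1" for c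
  proof -
    have "(\<Sum>g\<in>{1..N div c}. int (phi r c g) * int (C (N div c div g^2)))
        = (\<Sum>g\<in>{1..N div c}. int (phi r c g) * int (C (N div (c * g^2))))"
      by (simp add: div_mult2_eq)
    also have "\<dots> = (\<Sum>g\<in>{1..2*r}. int (phi r c g) * int (C (N div (c * g^2))))"
    proof (rule sum_extend)
      fix g assume g: "g \<in> {1..N div c} - {1..2*r}"
      then show "int (phi r c g) * int (C (N div (c * g^2))) = 0" using phi_zero[OF r _ c] by auto
    next
      fix g assume g: "g \<in> {1..2*r} - {1..N div c}"
      then have "g > N div c" "g \<ge> 1" by auto
      moreover have "g \<le> g * g" using mult_le_mono2[of 1 g g] \<open>g \<ge> 1\<close> by simp
      ultimately have "g^2 > N div c" unfolding power2_eq_square by linarith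
      then have "N div (c * g^2) = 0" by (simp add: div_mult2_eq)
      then show "int (phi r c g) * int (C (N div (c * g^2))) = 0" by simp
    qed auto
    finally show ?thesis .
  qed
  have "(\<Sum>d\<in>{1..N}. int (rho (r^2) d)) =
     (\<Sum>c\<in>{1..N}. mu c * (\<Sum>g\<in>{1..2*r}. int (phi r c g) * int (C (N div (c * g^2)))))"
    unfolding total_formula1
  proof (rule sum.cong[OF refl])
    fix c assume "c \<in> {1..N}"
    then have "c \<ge> 1" by simp
    show "mu c * (\<Sum>g\<in>{1..N div c}. int (phi r c g) * int (C (N div c div g^2))) =
          mu c * (\<Sum>g\<in>{1..2*r}. int (phi r c g) * int (C (N div (c * g^2))))"
      using inner[OF \<open>c \<ge> 1\<close>] by simp
  qed
  also have "\<dots> = (\<Sum>c\<in>{1..2*r}. mu c * (\<Sum>g\<in>{1..2*r}. int (phi r c g) * int (C (N div (c * g^2)))))"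
  proof (rule sum_extend)
    fix c assume c: "c \<in> {1..N} - {1..2*r}"
    then show "mu c * (\<Sum>g\<in>{1..2*r}. int (phi r c g) * int (C (N div (c * g^2)))) = 0"
      using phi_zero[OF r _ _] by auto
  next
    fix c assume c: "c \<in> {1..2*r} - {1..N}"
    then have "c > N" by auto
    then show "mu c * (\<Sum>g\<in>{1..2*r}. int (phi r c g) * int (C (N div (c * g^2)))) = 0"
      by (simp add: div_mult2_eq)
  qed auto
  also have "\<dots> = (\<Sum>c\<in>{1..2*r}. \<Sum>g\<in>{1..2*r}. mu c * int (phi r c g) * int (C (N div (c * g^2))))"
    by (simp add: sum_distrib_left mult.assoc)
  finally show ?thesis .
qed

lemma constant_one:
  assumes r: "r \<ge> 1"
  shows "(\<Sum>c\<in>{1..2*r}. \<Sum>g\<in>{1..2*r}. of_int (mu c) * real (phi r c g) / real (c * g^2)) = 1"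
proof -
  define s where "s = 2 * r"
  have s: "s > 0" using r by (simp add: s_def)
  define f where "f = (\<lambda>c g. if c * g dvd s then of_int (mu c) / real (c * g) else (0::real))"
  have "(\<Sum>m\<in>{1..s}. \<Sum>c\<in>{c. c dvd m}. f c (m div c)) = (\<Sum>m\<in>{1..s}. if m = 1 then 1 else 0)"
  proof (rule sum.cong[OF refl])
    fix m assume m: "m \<in> {1..s}"
    have "(\<Sum>c\<in>{c. c dvd m}. f c (m div c)) = (\<Sum>c\<in>{c. c dvd m}. if m dvd s then of_int (mu c) / real m else 0)"
      by (intro sum.cong refl) (simp add: f_def)
    also have "\<dots> = (if m dvd s then of_int (\<Sum>c\<in>{c. c dvd m}. mu c) / real m else 0)"
      by (simp add: sum_divide_distrib)
    also have "\<dots> = (if m = 1 then 1 else 0)" using m by (simp add: mu_sum)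
    finally show "(\<Sum>c\<in>{c. c dvd m}. f c (m div c)) = (if m = 1 then 1 else 0)" .
  qed
  also have "\<dots> = 1" using s by simp
  finally have 1: "(\<Sum>m\<in>{1..s}. \<Sum>c\<in>{c. c dvd m}. f c (m div c)) = 1" .
  have "(\<Sum>c\<in>{1..s}. \<Sum>g\<in>{1..s}. of_int (mu c) * real (phi r c g) / real (c * g^2))
      = (\<Sum>c\<in>{1..s}. \<Sum>g\<in>{1..s div c}. f c g)"
  proof (rule sum.cong[OF refl])
    fix c assume c: "c \<in> {1..s}"
    have "(\<Sum>g\<in>{1..s}. of_int (mu c) * real (phi r c g) / real (c * g^2)) = (\<Sum>g\<in>{1..s}. f c g)"
    proof (rule sum.cong[OF refl])
      fix g assume g: "g \<in> {1..s}"
      show "of_int (mu c) * real (phi r c g) / real (c * g^2) = f c g"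
        using g c by (auto simp: f_def phi_def s_def power2_eq_square field_simps)
    qed
    also have "\<dots> = (\<Sum>g\<in>{1..s div c}. f c g)"
    proof (rule sum_extend)
      fix g assume g: "g \<in> {1..s} - {1..s div c}"
      then have "g > s div c" by auto
      then have "\<not> g * c \<le> s" using c less_eq_div_iff_mult_less_eq[of c g s] by auto
      then have "c * g > s" by (simp add: mult.commute)
      then have "\<not> c * g dvd s" using s by (auto dest: dvd_imp_le)
      then show "f c g = 0" by (simp add: f_def)
    next
      fix g assume g: "g \<in> {1..s div c} - {1..s}"
      then have "g \<le> s div c" "\<not> g \<le> s" by auto
      then have False using div_le_dividend[of s c] by linarith
      then show "f c g = 0" ..
    qed auto
    finally show "(\<Sum>g\<in>{1..s}. of_int (mu c) * real (phi r c g) / real (c * g^2)) = (\<Sum>g\<in>{1..s div c}. f c g)" .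
  qed
  also have "\<dots> = (\<Sum>m\<in>{1..s}. \<Sum>c\<in>{c. c dvd m}. f c (m div c))"
    by (rule exchange[symmetric])
  finally show ?thesis using 1 by (simp add: s_def)
qed


lemma harm_le_ln1: "n \<ge> 1 \<Longrightarrow> harm n \<le> ln (real n) + (1::real)"
  using euler_mascheroni_sequence_decreasing[of 1 n] by (simp add: harm_def)

lemma harm_ge_ln': "harm n \<ge> ln (real n)"
proof (cases "n = 0")
  case True then show ?thesis by (simp add: harm_def)
next
  case False
  then have "ln (real n) \<le> ln (real n + 1)" by simp
  also have "\<dots> \<le> harm n" by (rule harm_ge_ln)
  finally show ?thesis .
qed

lemma D_bounds:
  assumes "n \<ge> 1"
  shows "real (D n) \<le> real n * ln (real n) + real n"
    and "real (D n) \<ge> real n * ln (real n) - real n"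
proof -
  have sumr: "real (D n) = (\<Sum>a\<in>{1..n}. real (n div a))" by (simp add: D_sum)
  have hs: "harm n = (\<Sum>a\<in>{1..n}. 1 / real a)" by (simp add: harm_def divide_inverse)
  have up: "real (n div a) \<le> real n / real a" for a by (simp add: of_nat_div_le_of_nat)
  have lo: "real (n div a) \<ge> real n / real a - 1" if "a \<ge> 1" for a
  proof -
    have "real n = real (n div a) * real a + real (n mod a)"
      by (metis of_nat_add of_nat_mult div_mult_mod_eq)
    moreover have "real (n mod a) < real a" using that by simp
    ultimately have "real n < (real (n div a) + 1) * real a" by (simp add: algebra_simps)
    then show ?thesis using that by (simp add: field_simps)
  qed
  have "real (D n) \<le> (\<Sum>a\<in>{1..n}. real n / real a)" unfolding sumr by (intro sum_mono up)
  also have "\<dots> = real n * harm n" by (simp add: hs sum_distrib_left)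
  also have "\<dots> \<le> real n * (ln (real n) + 1)" using harm_le_ln1[OF assms] by (intro mult_left_mono) auto
  finally show "real (D n) \<le> real n * ln (real n) + real n" by (simp add: algebra_simps)
  have "real n * ln (real n) - real n \<le> real n * harm n - real n"
    using harm_ge_ln'[of n] by (simp add: mult_left_mono)
  also have "\<dots> = (\<Sum>a\<in>{1..n}. real n / real a - 1)" by (simp add: hs sum_distrib_left sum_subtractf)
  also have "\<dots> \<le> real (D n)" unfolding sumr by (intro sum_mono lo) auto
  finally show "real (D n) \<ge> real n * ln (real n) - real n" .
qed

lemma D_limit: "(\<lambda>n. real (D n) / (real n * ln (real n))) \<longlonglongrightarrow> 1"
proof (rule tendsto_sandwich[where f = "\<lambda>n. 1 - 1 / ln (real n)" and h = "\<lambda>n. 1 + 1 / ln (real n)"])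
  show "eventually (\<lambda>n. 1 - 1 / ln (real n) \<le> real (D n) / (real n * ln (real n))) sequentially"
  proof (rule eventually_sequentiallyI[of 2])
    fix n :: nat assume n: "n \<ge> 2"
    then have l: "ln (real n) > 0" by simp
    have "1 - 1 / ln (real n) = (real n * ln (real n) - real n) / (real n * ln (real n))"
      using n l by (simp add: field_simps)
    also have "\<dots> \<le> real (D n) / (real n * ln (real n))"
      using D_bounds(2)[of n] n l by (intro divide_right_mono) auto
    finally show "1 - 1 / ln (real n) \<le> real (D n) / (real n * ln (real n))" .
  qed
  show "eventually (\<lambda>n. real (D n) / (real n * ln (real n)) \<le> 1 + 1 / ln (real n)) sequentially"
  proof (rule eventually_sequentiallyI[of 2])
    fix n :: nat assume n: "n \<ge> 2"
    then have l: "ln (real n) > 0" by simp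
    have "real (D n) / (real n * ln (real n)) \<le> (real n * ln (real n) + real n) / (real n * ln (real n))"
      using D_bounds(1)[of n] n l by (intro divide_right_mono) auto
    also have "\<dots> = 1 + 1 / ln (real n)" using n l by (simp add: field_simps)
    finally show "real (D n) / (real n * ln (real n)) \<le> 1 + 1 / ln (real n)" .
  qed
qed real_asymp+

lemma D_upper: "real (D m) \<le> real m * (ln (real m) + 1)"
  using D_bounds(1)[of m] by (cases "m = 0") (auto simp: algebra_simps)

lemma ln_ge_1: "n \<ge> 3 \<Longrightarrow> ln (real n) \<ge> 1"
proof -
  assume n: "n \<ge> 3"
  have "exp 1 \<le> (3::real)" by (rule exp_le)
  also have "\<dots> \<le> real n" using n by simp
  finally show ?thesis using n by (subst ln_ge_iff) auto
qed

lemma D_dom: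
  assumes t: "t \<ge> (1::nat)" and n: "n \<ge> 3"
  shows "real (D (n div t)) / (real n * ln (real n)) \<le> 2 / real t"
proof -
  define m where "m = n div t"
  have l: "ln (real n) \<ge> 1" using ln_ge_1[OF n] .
  have mn: "real m \<le> real n / real t" unfolding m_def by (simp add: of_nat_div_le_of_nat)
  have "real (D m) \<le> real m * (ln (real m) + 1)" by (rule D_upper)
  also have "\<dots> \<le> real m * (ln (real n) + 1)"
  proof (cases "m = 0")
    case False
    have "m \<le> n" unfolding m_def by simp
    then have "ln (real m) \<le> ln (real n)" using False by simp
    then show ?thesis by (intro mult_left_mono) auto
  qed simp
  also have "\<dots> \<le> (real n / real t) * (2 * ln (real n))"
    using mn l by (intro mult_mono) auto
  finally have "real (D m) \<le> (real n / real t) * (2 * ln (real n))" .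
  then show ?thesis unfolding m_def using n l t
    by (simp add: field_simps)
qed



lemma div_lower: "t \<ge> 1 \<Longrightarrow> real (n div t) \<ge> real n / real t - 1"
proof -
  assume t: "t \<ge> 1"
  have "real n = real (n div t) * real t + real (n mod t)"
    by (metis of_nat_add of_nat_mult div_mult_mod_eq)
  moreover have "real (n mod t) < real t" using t by simp
  ultimately have "real n < (real (n div t) + 1) * real t" by (simp add: algebra_simps)
  then show ?thesis using t by (simp add: field_simps)
qed

lemma scale_limit:
  fixes f :: "nat \<Rightarrow> real"
  assumes lim: "(\<lambda>n. f n / (real n * ln (real n))) \<longlonglongrightarrow> L" and t: "t \<ge> (1::nat)"
  shows "(\<lambda>n. f (n div t) / (real n * ln (real n))) \<longlonglongrightarrow> L / real t"
proof -
  have fl: "filterlim (\<lambda>n. n div t) sequentially sequentially"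
    unfolding filterlim_at_top
  proof
    fix Z :: nat
    show "eventually (\<lambda>n. Z \<le> n div t) sequentially"
      using t by (intro eventually_sequentiallyI[of "Z * t"]) (simp add: less_eq_div_iff_mult_less_eq)
  qed
  have l1: "(\<lambda>n. f (n div t) / (real (n div t) * ln (real (n div t)))) \<longlonglongrightarrow> L"
    using filterlim_compose[OF lim fl] by simp
  have l2: "(\<lambda>n. real (n div t) / real n) \<longlonglongrightarrow> 1 / real t"
  proof (rule tendsto_sandwich[where f = "\<lambda>n. 1 / real t - 1 / real n" and h = "\<lambda>n. 1 / real t"])
    show "eventually (\<lambda>n. 1 / real t - 1 / real n \<le> real (n div t) / real n) sequentially"
    proof (rule eventually_sequentiallyI[of 1])
      fix n :: nat assume n: "n \<ge> 1"
      have "1 / real t - 1 / real n = (real n / real t - 1) / real n" using n by (simp add: field_simps)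
      also have "\<dots> \<le> real (n div t) / real n" using div_lower[OF t, of n] n by (intro divide_right_mono) auto
      finally show "1 / real t - 1 / real n \<le> real (n div t) / real n" .
    qed
    show "eventually (\<lambda>n. real (n div t) / real n \<le> 1 / real t) sequentially"
    proof (rule eventually_sequentiallyI[of 1])
      fix n :: nat assume n: "n \<ge> 1"
      have "real (n div t) / real n \<le> (real n / real t) / real n"
        using n by (intro divide_right_mono of_nat_div_le_of_nat) auto
      also have "\<dots> = 1 / real t" using n by simp
      finally show "real (n div t) / real n \<le> 1 / real t" .
    qed
  qed (real_asymp, simp)
  have l3: "(\<lambda>n. ln (real (n div t)) / ln (real n)) \<longlonglongrightarrow> 1"
  proof (rule tendsto_sandwich[where f = "\<lambda>n. 1 - ln (2 * real t) / ln (real n)" and h = "\<lambda>n. 1"])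
    show "eventually (\<lambda>n. 1 - ln (2 * real t) / ln (real n) \<le> ln (real (n div t)) / ln (real n)) sequentially"
    proof (rule eventually_sequentiallyI[of "2 * t"])
      fix n :: nat assume n: "n \<ge> 2 * t"
      then have n2: "n \<ge> 2" using t by simp
      have lnp: "ln (real n) > 0" using n2 by simp
      have "real n / real t \<ge> 2" using n t by (simp add: field_simps)
      then have "real (n div t) \<ge> real n / (2 * real t)" using div_lower[OF t, of n] t by (simp add: field_simps)
      moreover have "real n / (2 * real t) > 0" using n2 t by simp
      ultimately have "ln (real n / (2 * real t)) \<le> ln (real (n div t))" by simp
      then have "ln (real n) - ln (2 * real t) \<le> ln (real (n div t))" using n2 t by (simp add: ln_div)
      then have "(ln (real n) - ln (2 * real t)) / ln (real n) \<le> ln (real (n div t)) / ln (real n)"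
        using lnp by (intro divide_right_mono) auto
      then show "1 - ln (2 * real t) / ln (real n) \<le> ln (real (n div t)) / ln (real n)"
        using lnp by (simp add: diff_divide_distrib)
    qed
    show "eventually (\<lambda>n. ln (real (n div t)) / ln (real n) \<le> 1) sequentially"
    proof (rule eventually_sequentiallyI[of "2 * t"])
      fix n :: nat assume n: "n \<ge> 2 * t"
      then have n2: "n \<ge> 2" using t by simp
      have lnp: "ln (real n) > 0" using n2 by simp
      have m0: "n div t > 0" using n t by (simp add: less_eq_div_iff_mult_less_eq Suc_le_eq[symmetric])
      have "real (n div t) \<le> real n" by simp
      then have "ln (real (n div t)) \<le> ln (real n)" using m0 n2 by (subst ln_le_cancel_iff) auto
      then show "ln (real (n div t)) / ln (real n) \<le> 1" using lnp by simp
    qed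
  qed (real_asymp, simp)
  have "(\<lambda>n. f (n div t) / (real (n div t) * ln (real (n div t))) * (real (n div t) / real n)
          * (ln (real (n div t)) / ln (real n))) \<longlonglongrightarrow> L / real t"
    using tendsto_mult[OF tendsto_mult[OF l1 l2] l3] by simp
  then show ?thesis
  proof (rule Lim_transform_eventually)
    show "eventually (\<lambda>n. f (n div t) / (real (n div t) * ln (real (n div t))) * (real (n div t) / real n)
          * (ln (real (n div t)) / ln (real n)) = f (n div t) / (real n * ln (real n))) sequentially"
    proof (rule eventually_sequentiallyI[of "2 * t"])
      fix n :: nat assume n: "n \<ge> 2 * t"
      then have n2: "n \<ge> 2" using t by simp
      have m2: "n div t \<ge> 2" using n t by (simp add: less_eq_div_iff_mult_less_eq mult.commute)
      have "ln (real (n div t)) > 0" "ln (real n) > 0" "real (n div t) > 0" "real n > 0" using m2 n2 by auto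
      then show "f (n div t) / (real (n div t) * ln (real (n div t))) * (real (n div t) / real n)
          * (ln (real (n div t)) / ln (real n)) = f (n div t) / (real n * ln (real n))"
        by (simp add: field_simps)
    qed
  qed
qed



lemma inv_sq_sums: "(\<lambda>k::nat. 1 / real k ^ 2) sums (pi^2 / 6)"
proof -
  have "(\<lambda>n. 1 / real (Suc n) ^ 2) sums (pi^2 / 6)"
    using inverse_squares_sums by (simp add: of_nat_power)
  then show ?thesis by (subst (asm) sums_Suc_iff) simp
qed

lemma summable_two_inv_sq: "summable (\<lambda>k::nat. 2 / real k ^ 2)"
proof -
  have "summable (\<lambda>k::nat. 2 * (1 / real k ^ 2))"
    using inv_sq_sums by (intro summable_mult) (auto simp: sums_iff)
  then show ?thesis by simp
qed

definition Mc :: real where "Mc = (\<Sum>k. real_of_int (mu k) / real k ^ 2)"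

lemma big_k: "k > n \<Longrightarrow> n div k^2 = (0::nat)"
proof -
  assume "k > n"
  moreover have "k \<le> k^2" by (simp add: power2_eq_square)
  ultimately show ?thesis by simp
qed

lemma C_limit: "(\<lambda>n. real (C n) / (real n * ln (real n))) \<longlonglongrightarrow> Mc"
proof -
  define a where "a = (\<lambda>k n. real_of_int (mu k) * (real (D (n div k^2)) / (real n * ln (real n))))"
  have T: "(\<lambda>n. suminf (\<lambda>k. a k n)) \<longlonglongrightarrow> (\<Sum>k. real_of_int (mu k) / real k ^ 2)"
  proof (rule tannerys_theorem[THEN conjunct2, THEN conjunct2])
    fix k
    show "(\<lambda>n. a k n) \<longlonglongrightarrow> real_of_int (mu k) / real k ^ 2"
    proof (cases "k = 0")
      case True then show ?thesis by (simp add: a_def)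
    next
      case False
      then have "k^2 \<ge> 1" by (simp add: Suc_le_eq)
      from scale_limit[OF D_limit[unfolded of_nat_0] this]
      have "(\<lambda>n. real (D (n div k^2)) / (real n * ln (real n))) \<longlonglongrightarrow> 1 / real (k^2)" by simp
      then have "(\<lambda>n. a k n) \<longlonglongrightarrow> real_of_int (mu k) * (1 / real (k^2))"
        unfolding a_def by (intro tendsto_mult_left)
      then show ?thesis by (simp add: of_nat_power)
    qed
  next
    show "eventually (\<lambda>(k, n). norm (a k n) \<le> 2 / real k ^ 2) (at_top \<times>\<^sub>F sequentially)"
      unfolding eventually_prod_sequentially
    proof (intro exI[of _ 3] allI impI)
      fix k n :: nat assume n: "n \<ge> 3" and k: "k \<ge> 3"
      have "k^2 \<ge> 1" using k by (simp add: Suc_le_eq)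
      have "norm (a k n) = \<bar>real_of_int (mu k)\<bar> * (real (D (n div k^2)) / (real n * ln (real n)))"
        unfolding a_def using ln_ge_1[OF n] n by (simp add: abs_mult)
      also have "\<dots> \<le> 1 * (2 / real (k^2))"
        using D_dom[OF \<open>k^2 \<ge> 1\<close> n] mu_abs_le[of k] ln_ge_1[OF n] n
        by (intro mult_mono) auto
      finally show "(case (k, n) of (k, n) \<Rightarrow> norm (a k n) \<le> 2 / real k ^ 2)" by (simp add: of_nat_power)
    qed
  next
    show "summable (\<lambda>k::nat. 2 / real k ^ 2)" by (rule summable_two_inv_sq)
  qed simp
  have "suminf (\<lambda>k. a k n) = real (C n) / (real n * ln (real n))" for n
  proof -
    have "suminf (\<lambda>k. a k n) = (\<Sum>k\<in>{1..n}. a k n)"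
    proof (rule suminf_finite)
      fix k assume "k \<notin> {1..n}"
      then have "k = 0 \<or> k > n" by auto
      then show "a k n = 0" unfolding a_def using big_k by auto
    qed simp
    also have "\<dots> = (\<Sum>k\<in>{1..n}. real_of_int (mu k * int (D (n div k^2)))) / (real n * ln (real n))"
      unfolding a_def by (simp add: sum_divide_distrib)
    also have "\<dots> = real (C n) / (real n * ln (real n))"
      by (subst of_int_sum[symmetric], subst C_as_D[symmetric]) simp
    finally show ?thesis .
  qed
  then show ?thesis using T by (simp add: Mc_def)
qed

lemma Mc_value: "Mc = 6 / pi^2"
proof -
  define a where "a = (\<lambda>k n. real (C (n div k^2)) / (real n * ln (real n)))"
  have T: "(\<lambda>n. suminf (\<lambda>k. a k n)) \<longlonglongrightarrow> (\<Sum>k. Mc * (1 / real k ^ 2))"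
  proof (rule tannerys_theorem[THEN conjunct2, THEN conjunct2])
    fix k
    show "(\<lambda>n. a k n) \<longlonglongrightarrow> Mc * (1 / real k ^ 2)"
    proof (cases "k = 0")
      case True then show ?thesis by (simp add: a_def)
    next
      case False
      then have "k^2 \<ge> 1" by (simp add: Suc_le_eq)
      from scale_limit[OF C_limit this]
      show ?thesis by (simp add: a_def of_nat_power)
    qed
  next
    show "eventually (\<lambda>(k, n). norm (a k n) \<le> 2 / real k ^ 2) (at_top \<times>\<^sub>F sequentially)"
      unfolding eventually_prod_sequentially
    proof (intro exI[of _ 3] allI impI)
      fix k n :: nat assume n: "n \<ge> 3" and k: "k \<ge> 3"
      have "k^2 \<ge> 1" using k by (simp add: Suc_le_eq)
      have "norm (a k n) = real (C (n div k^2)) / (real n * ln (real n))"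
        unfolding a_def using ln_ge_1[OF n] n by simp
      also have "\<dots> \<le> real (D (n div k^2)) / (real n * ln (real n))"
        using C_le_D[of "n div k^2"] ln_ge_1[OF n] n by (intro divide_right_mono) auto
      also have "\<dots> \<le> 2 / real (k^2)" by (rule D_dom[OF \<open>k^2 \<ge> 1\<close> n])
      finally show "(case (k, n) of (k, n) \<Rightarrow> norm (a k n) \<le> 2 / real k ^ 2)" by (simp add: of_nat_power)
    qed
  next
    show "summable (\<lambda>k::nat. 2 / real k ^ 2)" by (rule summable_two_inv_sq)
  qed simp
  have "suminf (\<lambda>k. a k n) = real (D n) / (real n * ln (real n))" for n
  proof -
    have "suminf (\<lambda>k. a k n) = (\<Sum>k\<in>{1..n}. a k n)"
    proof (rule suminf_finite)
      fix k assume "k \<notin> {1..n}"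
      then have "k = 0 \<or> k > n" by auto
      then show "a k n = 0" unfolding a_def using big_k by auto
    qed simp
    also have "\<dots> = real (D n) / (real n * ln (real n))"
      unfolding a_def by (simp add: sum_divide_distrib[symmetric] D_as_C)
    finally show ?thesis .
  qed
  then have T': "(\<lambda>n. real (D n) / (real n * ln (real n))) \<longlonglongrightarrow> Mc * (pi^2 / 6)"
    using T sums_unique[OF sums_mult[OF inv_sq_sums, of Mc]] by simp
  have "Mc * (pi^2 / 6) = 1" using LIMSEQ_unique[OF T' D_limit] .
  then show ?thesis by (simp add: field_simps)
qed

theorem theorem1:
  fixes r :: nat
  assumes "r \<ge> 1"
  shows "(\<lambda>N::nat. real (\<Sum>l=1..N. rho (r^2) l))
           \<sim>[at_top] (\<lambda>N. 6 / pi^2 * real N * ln (real N))"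
proof -
  define s where "s = 2 * r"
  have S: "real (\<Sum>l=1..N. rho (r^2) l) =
     (\<Sum>c\<in>{1..s}. \<Sum>g\<in>{1..s}. real_of_int (mu c) * real (phi r c g) * real (C (N div (c * g^2))))" for N
  proof -
    have "real (\<Sum>l=1..N. rho (r^2) l) = real_of_int (\<Sum>l=1..N. int (rho (r^2) l))" by simp
    also have "\<dots> = real_of_int (\<Sum>c\<in>{1..s}. \<Sum>g\<in>{1..s}. mu c * int (phi r c g) * int (C (N div (c * g^2))))"
      unfolding s_def by (subst total_formula[OF assms]) simp
    also have "\<dots> = (\<Sum>c\<in>{1..s}. \<Sum>g\<in>{1..s}. real_of_int (mu c) * real (phi r c g) * real (C (N div (c * g^2))))"
      by simp
    finally show ?thesis .
  qed
  have lim: "(\<lambda>N. real (\<Sum>l=1..N. rho (r^2) l) / (real N * ln (real N)))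
      \<longlonglongrightarrow> (\<Sum>c\<in>{1..s}. \<Sum>g\<in>{1..s}. real_of_int (mu c) * real (phi r c g) * (Mc / real (c * g^2)))"
  proof -
    have "(\<lambda>N. (\<Sum>c\<in>{1..s}. \<Sum>g\<in>{1..s}. real_of_int (mu c) * real (phi r c g) * (real (C (N div (c * g^2))) / (real N * ln (real N)))))
      \<longlonglongrightarrow> (\<Sum>c\<in>{1..s}. \<Sum>g\<in>{1..s}. real_of_int (mu c) * real (phi r c g) * (Mc / real (c * g^2)))"
    proof (intro tendsto_sum tendsto_mult_left)
      fix c g assume "c \<in> {1..s}" "g \<in> {1..s}"
      then have "c * g^2 \<ge> 1" by (simp add: Suc_le_eq)
      then show "(\<lambda>N. real (C (N div (c * g^2))) / (real N * ln (real N))) \<longlonglongrightarrow> Mc / real (c * g^2)"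
        by (rule scale_limit[OF C_limit])
    qed
    moreover have "(\<Sum>c\<in>{1..s}. \<Sum>g\<in>{1..s}. real_of_int (mu c) * real (phi r c g) * (real (C (N div (c * g^2))) / (real N * ln (real N))))
        = real (\<Sum>l=1..N. rho (r^2) l) / (real N * ln (real N))" for N
      unfolding S by (simp add: sum_divide_distrib)
    ultimately show ?thesis by simp
  qed
  have "(\<Sum>c\<in>{1..s}. \<Sum>g\<in>{1..s}. real_of_int (mu c) * real (phi r c g) * (Mc / real (c * g^2)))
      = Mc * (\<Sum>c\<in>{1..s}. \<Sum>g\<in>{1..s}. of_int (mu c) * real (phi r c g) / real (c * g^2))"
    unfolding sum_distrib_left by (intro sum.cong refl) (simp add: field_simps)
  also have "\<dots> = Mc" using constant_one[OF assms] by (simp add: s_def)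
  finally have lim': "(\<lambda>N. real (\<Sum>l=1..N. rho (r^2) l) / (real N * ln (real N))) \<longlonglongrightarrow> 6 / pi^2"
    using lim by (simp add: Mc_value)
  have "(\<lambda>N. (real (\<Sum>l=1..N. rho (r^2) l) / (real N * ln (real N))) / (6 / pi^2)) \<longlonglongrightarrow> (6 / pi^2) / (6 / pi^2)"
    by (intro tendsto_divide lim') auto
  then have "(\<lambda>N. real (\<Sum>l=1..N. rho (r^2) l) / (6 / pi^2 * real N * ln (real N))) \<longlonglongrightarrow> 1"
    by (simp add: field_simps)
  then show ?thesis by (rule asymp_equivI')
qed


end
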